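(* Let $p(x)=\frac1{\sqrt{2\pi}}e^{-x^2/2}$ be the density of $N(0,1)$ on $\mathbb{R}$. There exists an absolute constant $C$ such that for every $\varepsilon>0$ there exists a probability density $q$ on $\mathbb{R}$ such that (1) $\ln q$ is $C$-smooth (i.e. $(\ln q)'$ is $C$-Lipschitz); (2) $\mathbb{E}_p\big[|(\ln p)'(x)-(\ln q)'(x)|^2\big]<\varepsilon$; (3) $\mathrm{TV}(p,q)>1-\varepsilon$. *)

theory Defs
  imports "HOL-Probability.Probability"
begin

text \<open>A probability density on the real line (w.r.t. Lebesgue measure) with
  everywhere positive values, so that its logarithm is defined everywhere.\<close>
definition pos_prob_density :: "(real \<Rightarrow> real) \<Rightarrow> bool" where
  "pos_prob_density q \<longleftrightarrow> (\<forall>x. q x > 0) \<and> integrable lborel q \<and> (\<integral>x. q x \<partial>lborel) = 1"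

definition tv_dist :: "(real \<Rightarrow> real) \<Rightarrow> (real \<Rightarrow> real) \<Rightarrow> real" where
  "tv_dist p q = (1/2) * (\<integral>x. \<bar>p x - q x\<bar> \<partial>lborel)"

definition score :: "(real \<Rightarrow> real) \<Rightarrow> real \<Rightarrow> real" where
  "score q x = deriv (\<lambda>t. ln (q t)) x"

end

theory Submission
  imports Defs "HOL-Real_Asymp.Real_Asymp"
begin

lemma maxsq_deriv: "((\<lambda>x::real. (max 0 x)\<^sup>2) has_real_derivative 2 * max 0 x) (at x)"
proof (cases "x = 0")
  case True
  have eq: "(\<lambda>h::real. ((max 0 (x + h))\<^sup>2 - (max 0 x)\<^sup>2) / h) = (\<lambda>h. max 0 h)"
    using True by (auto simp: fun_eq_iff max_def power2_eq_square)
  have "((\<lambda>h::real. max 0 h) \<longlongrightarrow> max 0 0) (at 0)"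
    by (intro tendsto_intros)
  then show ?thesis unfolding DERIV_def eq using True by simp
next
  case False
  show ?thesis
  proof (cases "x > 0")
    case True
    have ev: "eventually (\<lambda>y. (max 0 y)\<^sup>2 = y\<^sup>2) (nhds x)"
      using order_tendstoD(1)[OF filterlim_ident True] by (rule eventually_mono) simp
    have "((\<lambda>x::real. x\<^sup>2) has_real_derivative 2 * x) (at x)"
      by (auto intro!: derivative_eq_intros)
    then show ?thesis using True DERIV_cong_ev[OF refl ev, of "2*x" "2*max 0 x"] by simp
  next
    case F2: False
    have ev: "eventually (\<lambda>y. (max 0 y)\<^sup>2 = (0::real)) (nhds x)"
      using F2 False order_tendstoD(2)[OF filterlim_ident, of x 0]
      by (auto elim!: eventually_mono)
    have "((\<lambda>x::real. 0) has_real_derivative 0) (at x)"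
      by (auto intro!: derivative_eq_intros)
    then show ?thesis using F2 False DERIV_cong_ev[OF refl ev, of "0" "2*max 0 x"] by simp
  qed
qed


lemma maxsq_deriv': "((\<lambda>x::real. (max 0 (x - c))\<^sup>2) has_real_derivative 2 * max 0 (x - c)) (at x)"
proof -
  have "((\<lambda>x::real. x - c) has_real_derivative 1) (at x)"
    by (auto intro!: derivative_eq_intros)
  from DERIV_chain2[OF maxsq_deriv this] show ?thesis by simp
qed

lemma max0_lip: "\<bar>max 0 a - max 0 b\<bar> \<le> \<bar>a - b\<bar>" for a b :: real
  by (auto simp: max_def)

definition VV :: "real \<Rightarrow> real \<Rightarrow> real \<Rightarrow> real" where
  "VV R d x = x\<^sup>2/2 - (max 0 (x - R))\<^sup>2 + (max 0 (x - (2*R - d)))\<^sup>2/2"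

definition VD :: "real \<Rightarrow> real \<Rightarrow> real \<Rightarrow> real" where
  "VD R d x = x - 2 * max 0 (x - R) + max 0 (x - (2*R - d))"

lemma VV_deriv: "(VV R d has_real_derivative VD R d x) (at x)"
proof -
  have a: "((\<lambda>x::real. x\<^sup>2/2) has_real_derivative x) (at x)"
    by (auto intro!: derivative_eq_intros)
  have "((\<lambda>x. x\<^sup>2/2 - (max 0 (x - R))\<^sup>2 + (max 0 (x - (2*R - d)))\<^sup>2/2) has_real_derivative
     (x - 2 * max 0 (x - R) + 2 * max 0 (x - (2*R - d)) / 2)) (at x)"
    by (intro DERIV_add DERIV_diff a maxsq_deriv' DERIV_cdivide)
  then show ?thesis unfolding VV_def[abs_def] VD_def by simp
qed

lemma abs3: "\<bar>(a - 2 * b + c) - (a' - 2 * b' + c')\<bar> \<le> \<bar>a - a'\<bar> + 2 * \<bar>b - b'\<bar> + \<bar>c - c'\<bar>" for a b c a' b' c' :: real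
  by (simp add: abs_if)

lemma VD_lip: "\<bar>VD R d x - VD R d y\<bar> \<le> 4 * \<bar>x - y\<bar>"
proof -
  have "\<bar>VD R d x - VD R d y\<bar> \<le> \<bar>x - y\<bar> + 2 * \<bar>max 0 (x - R) - max 0 (y - R)\<bar>
      + \<bar>max 0 (x - (2*R - d)) - max 0 (y - (2*R - d))\<bar>"
    unfolding VD_def by (rule abs3)
  also have "\<dots> \<le> \<bar>x - y\<bar> + 2 * \<bar>x - y\<bar> + \<bar>x - y\<bar>"
    using max0_lip[of "x - R" "y - R"] max0_lip[of "x - (2*R - d)" "y - (2*R - d)"] by simp
  finally show ?thesis by simp
qed

lemma VV_low: "x \<le> R \<Longrightarrow> 0 < d \<Longrightarrow> d \<le> R \<Longrightarrow> VV R d x = x\<^sup>2/2"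
  unfolding VV_def by (auto simp: max_def)

lemma VD_low: "x \<le> R \<Longrightarrow> 0 < d \<Longrightarrow> d \<le> R \<Longrightarrow> VD R d x = x"
  unfolding VD_def by (auto simp: max_def)

lemma VV_mid: "R \<le> x \<Longrightarrow> x \<le> 2*R - d \<Longrightarrow> 0 < d \<Longrightarrow> d \<le> R \<Longrightarrow> 0 \<le> VV R d x"
proof -
  assume a: "R \<le> x" "x \<le> 2*R - d" "0 < d" "d \<le> R"
  have "(x - R)\<^sup>2 \<le> (x/2)\<^sup>2" using a by (intro power_mono) auto
  also have "(x/2)\<^sup>2 = x\<^sup>2/4" by (simp add: power_divide)
  finally have "(x - R)\<^sup>2 \<le> x\<^sup>2/4" .
  moreover have "0 \<le> (x - R)\<^sup>2" by simp
  moreover have "VV R d x = x\<^sup>2/2 - (x - R)\<^sup>2" using a unfolding VV_def by (simp add: max_def)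
  ultimately show ?thesis by linarith
qed

lemma VV_high: "2*R - d \<le> x \<Longrightarrow> 0 < d \<Longrightarrow> d \<le> R \<Longrightarrow> VV R d x = R\<^sup>2 - d\<^sup>2/2 + d * (x - (2*R - d))"
proof -
  assume a: "2*R - d \<le> x" "0 < d" "d \<le> R"
  then have "max 0 (x - R) = x - R" "max 0 (x - (2*R - d)) = x - (2*R - d)" by auto
  then show ?thesis unfolding VV_def by (simp add: power2_eq_square field_simps)
qed

lemma VD_high: "2*R - d \<le> x \<Longrightarrow> 0 < d \<Longrightarrow> d \<le> R \<Longrightarrow> VD R d x = d"
  unfolding VD_def by (auto simp: max_def)

lemma VD_gap: "0 < d \<Longrightarrow> d \<le> R \<Longrightarrow> (VD R d x - x)\<^sup>2 \<le> 4 * x\<^sup>2 * indicator {R..} x"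
proof (cases "x \<le> R")
  case True
  assume "0 < d" "d \<le> R"
  then show ?thesis using True by (simp add: VD_low indicator_def)
next
  case False
  assume d: "0 < d" "d \<le> R"
  have "VD R d x - x = - 2 * (x - R) + max 0 (x - (2*R - d))" using False unfolding VD_def by simp
  moreover have "0 \<le> max 0 (x - (2*R - d))" "max 0 (x - (2*R - d)) \<le> x - R" using False d by auto
  ultimately have "\<bar>VD R d x - x\<bar> \<le> 2 * x" using False d by auto
  then have "(VD R d x - x)\<^sup>2 \<le> (2 * x)\<^sup>2"
    by (metis abs_le_square_iff abs_of_nonneg mult_nonneg_nonneg zero_le_numeral abs_ge_zero order.trans)
  then show ?thesis using False by (simp add: indicator_def power_mult_distrib)
qed

lemma VV_meas[measurable]: "VV R d \<in> borel_measurable borel"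
  unfolding VV_def[abs_def] by measurable


context
  fixes R d :: real
  assumes R: "0 < R" and d: "0 < d" "d \<le> R"
begin

lemma VV_b: "VV R d (2*R - d) = R\<^sup>2 - d\<^sup>2/2"
  using VV_high[of R d "2*R-d"] d by simp

lemma tail_nn: "(\<integral>\<^sup>+x. ennreal (exp (- VV R d x)) * indicator {2*R-d..} x \<partial>lborel) = ennreal (exp (- VV R d (2*R-d)) / d)"
proof -
  have "(\<integral>\<^sup>+x. ennreal (exp (- VV R d x)) * indicator {2*R-d..} x \<partial>lborel) = 0 - (- exp (- VV R d (2*R-d)) / d)"
  proof (rule nn_integral_FTC_atLeast)
    show "(\<lambda>x. exp (- VV R d x)) \<in> borel_measurable borel" by measurable
    show "0 \<le> exp (- VV R d x)" for x by simp
    fix x assume x: "2*R - d \<le> x"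
    have e: "((\<lambda>x. exp (- VV R d x)) has_real_derivative exp (- VV R d x) * (- VD R d x)) (at x)"
      using DERIV_chain2[OF DERIV_exp DERIV_minus[OF VV_deriv]] .
    from DERIV_cdivide[OF DERIV_minus[OF e], of d]
    show "((\<lambda>x. - exp (- VV R d x) / d) has_real_derivative exp (- VV R d x)) (at x)"
      using VD_high[OF x d] d by simp
  next
    have ev: "eventually (\<lambda>x. - exp (- (R\<^sup>2 - d\<^sup>2/2 + d * (x - (2*R - d)))) / d = - exp (- VV R d x) / d) at_top"
      using eventually_ge_at_top[of "2*R-d"] by eventually_elim (simp add: VV_high d)
    have "((\<lambda>x. - exp (- (R\<^sup>2 - d\<^sup>2/2 + d * (x - (2*R - d)))) / d) \<longlongrightarrow> 0) at_top"
      using d by real_asymp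
    then show "((\<lambda>x. - exp (- VV R d x) / d) \<longlongrightarrow> 0) at_top"
      using tendsto_cong[OF ev] by simp
  qed
  then show ?thesis by simp
qed

lemma tail_int: "integrable lborel (\<lambda>x. exp (- VV R d x) * indicator {2*R-d..} x)"
proof (rule integrableI_nonneg)
  show "(\<lambda>x. exp (- VV R d x) * indicator {2*R-d..} x) \<in> borel_measurable lborel" by measurable
  show "AE x in lborel. 0 \<le> exp (- VV R d x) * indicator {2*R-d..} x" by simp
  have "(\<integral>\<^sup>+x. ennreal (exp (- VV R d x) * indicator {2*R-d..} x) \<partial>lborel)
     = (\<integral>\<^sup>+x. ennreal (exp (- VV R d x)) * indicator {2*R-d..} x \<partial>lborel)"
    by (intro nn_integral_cong) (simp add: indicator_def)
  then show "(\<integral>\<^sup>+x. ennreal (exp (- VV R d x) * indicator {2*R-d..} x) \<partial>lborel) < \<infinity>"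
    using tail_nn by simp
qed

lemma tail_integral: "(\<integral>x. exp (- VV R d x) * indicator {2*R-d..} x \<partial>lborel) = exp (- VV R d (2*R-d)) / d"
proof -
  have "(\<integral>x. exp (- VV R d x) * indicator {2*R-d..} x \<partial>lborel)
     = enn2real (\<integral>\<^sup>+x. ennreal (exp (- VV R d x) * indicator {2*R-d..} x) \<partial>lborel)"
    by (rule integral_eq_nn_integral) auto
  also have "(\<integral>\<^sup>+x. ennreal (exp (- VV R d x) * indicator {2*R-d..} x) \<partial>lborel)
     = (\<integral>\<^sup>+x. ennreal (exp (- VV R d x)) * indicator {2*R-d..} x \<partial>lborel)"
    by (intro nn_integral_cong) (simp add: indicator_def)
  finally show ?thesis using tail_nn d by simp
qed

lemma f_int: "integrable lborel (\<lambda>x. exp (- VV R d x))"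
proof (rule Bochner_Integration.integrable_bound)
  let ?G = "\<lambda>x. sqrt (2*pi) * std_normal_density x + indicator {R..2*R-d} x + exp (- VV R d x) * indicator {2*R-d..} x"
  show "integrable lborel ?G"
  proof (intro Bochner_Integration.integrable_add tail_int)
    show "integrable lborel (\<lambda>x. sqrt (2*pi) * std_normal_density x)"
      by (intro integrable_mult_right integrable_normal_density) auto
    show "integrable lborel (indicator {R..2*R-d} :: real \<Rightarrow> real)"
      using d by (intro integrable_real_indicator) (auto simp: emeasure_lborel_Icc)
  qed
  show "(\<lambda>x. exp (- VV R d x)) \<in> borel_measurable lborel" by measurable
  show "AE x in lborel. norm (exp (- VV R d x)) \<le> norm (?G x)"
  proof (rule AE_I2)
    fix x
    have G0: "0 \<le> ?G x" by (simp add: indicator_def)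
    have "exp (- VV R d x) \<le> ?G x"
    proof (cases "x \<le> R")
      case True
      have "exp (- VV R d x) = sqrt (2*pi) * std_normal_density x"
        using VV_low[OF True d] by (simp add: std_normal_density_def)
      then show ?thesis by (simp add: indicator_def)
    next
      case False
      show ?thesis
      proof (cases "x \<le> 2*R - d")
        case True
        have "exp (- VV R d x) \<le> 1" using VV_mid[of R x d] True False d by simp
        moreover have "0 \<le> sqrt (2*pi) * std_normal_density x" by simp
        moreover have "0 \<le> exp (- VV R d x) * indicator {2*R-d..} x" by simp
        moreover have "indicator {R..2*R-d} x = (1::real)" using True False by simp
        ultimately show ?thesis by linarith
      next
        case F2: False
        then show ?thesis by (simp add: indicator_def)
      qed
    qed
    then show "norm (exp (- VV R d x)) \<le> norm (?G x)" using G0 by simp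
  qed
qed

lemma Z_low: "exp (- R\<^sup>2) / d \<le> (\<integral>x. exp (- VV R d x) \<partial>lborel)"
proof -
  have "exp (- R\<^sup>2) / d \<le> exp (- VV R d (2*R-d)) / d"
    using d by (intro divide_right_mono) (auto simp: VV_b)
  also have "\<dots> = (\<integral>x. exp (- VV R d x) * indicator {2*R-d..} x \<partial>lborel)" by (rule tail_integral[symmetric])
  also have "\<dots> \<le> (\<integral>x. exp (- VV R d x) \<partial>lborel)"
    by (intro integral_mono tail_int f_int) (simp add: indicator_def)
  finally show ?thesis .
qed

end


lemma score_std: "score std_normal_density x = - x"
proof -
  have eq: "(\<lambda>t. ln (std_normal_density t)) = (\<lambda>t. ln (1 / sqrt (2*pi)) - t\<^sup>2/2)"
    by (auto simp: fun_eq_iff std_normal_density_def ln_div)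
  have "((\<lambda>t. ln (1 / sqrt (2*pi)) - t\<^sup>2/2) has_real_derivative - x) (at x)"
    by (auto intro!: derivative_eq_intros)
  then show ?thesis unfolding score_def eq by (rule DERIV_imp_deriv)
qed

lemma tail_limits:
  assumes e: "0 < (e::real)"
  shows "\<exists>R\<ge>1. (\<integral>x. 4 * (std_normal_density x * x^2) * indicator {R..} x \<partial>lborel) < e/2 \<and>
                (\<integral>x. std_normal_density x * indicator {R<..} x \<partial>lborel) < e/4"
proof -
  have L1: "((\<lambda>R. \<integral>x. 4 * (std_normal_density x * x^2) * indicator {R..} x \<partial>lborel) \<longlongrightarrow> (\<integral>x. (0::real) \<partial>(lborel::real measure))) at_top"
  proof (rule integral_dominated_convergence_at_top[where w="\<lambda>x. 4 * (std_normal_density x * x^2)" and f="\<lambda>x. 0"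
      and s="\<lambda>R x. 4 * (std_normal_density x * x^2) * indicator {R..} x"])
    show "(\<lambda>x. 0::real) \<in> borel_measurable lborel" by simp
    show "(\<lambda>x. 4 * (std_normal_density x * x^2) * indicator {R..} x) \<in> borel_measurable lborel" for R :: real
      by measurable
    show "integrable lborel (\<lambda>x. 4 * (std_normal_density x * x^2))"
      by (intro integrable_mult_right integrable_std_normal_moment)
    show "AE x in lborel. ((\<lambda>R. 4 * (std_normal_density x * x^2) * indicator {R..} x) \<longlongrightarrow> 0) at_top"
    proof (rule AE_I2)
      fix x :: real
      show "((\<lambda>R. 4 * (std_normal_density x * x^2) * indicator {R..} x) \<longlongrightarrow> 0) at_top"
        by (rule tendsto_eventually) (use eventually_gt_at_top[of x] in \<open>eventually_elim, simp add: indicator_def\<close>)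
    qed
    show "\<forall>\<^sub>F R in at_top. AE x in lborel. norm (4 * (std_normal_density x * x^2) * indicator {R..} x) \<le> 4 * (std_normal_density x * x^2)"
      by (intro always_eventually allI AE_I2) (simp add: indicator_def abs_mult)
  qed
  have L2: "((\<lambda>R. \<integral>x. std_normal_density x * indicator {R<..} x \<partial>lborel) \<longlongrightarrow> (\<integral>x. (0::real) \<partial>(lborel::real measure))) at_top"
  proof (rule integral_dominated_convergence_at_top[where w="\<lambda>x. std_normal_density x" and f="\<lambda>x. 0"
      and s="\<lambda>R x. std_normal_density x * indicator {R<..} x"])
    show "(\<lambda>x. 0::real) \<in> borel_measurable lborel" by simp
    show "(\<lambda>x. std_normal_density x * indicator {R<..} x) \<in> borel_measurable lborel" for R :: real
      by measurable
    show "integrable lborel (\<lambda>x. std_normal_density x)"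
      by (rule integrable_normal_density) auto
    show "AE x in lborel. ((\<lambda>R. std_normal_density x * indicator {R<..} x) \<longlongrightarrow> 0) at_top"
    proof (rule AE_I2)
      fix x :: real
      show "((\<lambda>R. std_normal_density x * indicator {R<..} x) \<longlongrightarrow> 0) at_top"
        by (rule tendsto_eventually) (use eventually_gt_at_top[of x] in \<open>eventually_elim, simp add: indicator_def\<close>)
    qed
    show "\<forall>\<^sub>F R in at_top. AE x in lborel. norm (std_normal_density x * indicator {R<..} x) \<le> std_normal_density x"
      by (intro always_eventually allI AE_I2) (simp add: indicator_def)
  qed
  have "eventually (\<lambda>R. 1 \<le> R \<and> (\<integral>x. 4 * (std_normal_density x * x^2) * indicator {R..} x \<partial>lborel) < e/2 \<and>
                (\<integral>x. std_normal_density x * indicator {R<..} x \<partial>lborel) < e/4) at_top"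
  proof (intro eventually_conj)
    show "eventually (\<lambda>R::real. 1 \<le> R) at_top" using eventually_ge_at_top[of "1::real"] by simp
    show "eventually (\<lambda>R. (\<integral>x. 4 * (std_normal_density x * x^2) * indicator {R..} x \<partial>lborel) < e/2) at_top"
      using L1 e by (intro order_tendstoD(2)) auto
    show "eventually (\<lambda>R. (\<integral>x. std_normal_density x * indicator {R<..} x \<partial>lborel) < e/4) at_top"
      using L2 e by (intro order_tendstoD(2)) auto
  qed
  then obtain N where "\<forall>R\<ge>N. 1 \<le> R \<and> (\<integral>x. 4 * (std_normal_density x * x^2) * indicator {R..} x \<partial>lborel) < e/2 \<and>
                (\<integral>x. std_normal_density x * indicator {R<..} x \<partial>lborel) < e/4"
    unfolding eventually_at_top_linorder by blast
  then show ?thesis by blast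
qed


theorem theorem12:
  shows "\<exists>C::real. \<forall>\<epsilon>>0. \<exists>q :: real \<Rightarrow> real.
     pos_prob_density q \<and>
     (\<forall>x. (\<lambda>t. ln (q t)) differentiable (at x)) \<and>
     C-lipschitz_on UNIV (score q) \<and>
     (\<integral>\<^sup>+x. ennreal (std_normal_density x * (score std_normal_density x - score q x)\<^sup>2) \<partial>lborel) < ennreal \<epsilon> \<and>
     tv_dist std_normal_density q > 1 - \<epsilon>"
proof (intro exI[of _ 4] allI impI)
  fix e :: real assume e: "0 < e"
  obtain R where R1: "1 \<le> R"
    and I1: "(\<integral>x. 4 * (std_normal_density x * x^2) * indicator {R..} x \<partial>lborel) < e/2"
    and I2: "(\<integral>x. std_normal_density x * indicator {R<..} x \<partial>lborel) < e/4"
    using tail_limits[OF e] by blast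
  define K where "K = 4 * sqrt (2*pi) * exp (R\<^sup>2)"
  have K: "0 < K" unfolding K_def by simp
  define d where "d = min R (e / K)"
  have R: "0 < R" using R1 by simp
  have d: "0 < d" "d \<le> R" "d \<le> e / K" using R e K unfolding d_def by auto
  define Z where "Z = (\<integral>x. exp (- VV R d x) \<partial>lborel)"
  have Zl: "exp (- R\<^sup>2) / d \<le> Z" unfolding Z_def by (rule Z_low[OF R d(1,2)])
  have Zp: "0 < Z" using Zl d by (smt (verit) divide_pos_pos exp_gt_zero)
  have fint: "integrable lborel (\<lambda>x. exp (- VV R d x))" by (rule f_int[OF R d(1,2)])
  define q where "q x = exp (- VV R d x) / Z" for x
  have qint: "integrable lborel q" unfolding q_def using fint by simp
  have qpos: "0 < q x" for x unfolding q_def using Zp by simp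
  have qi1: "(\<integral>x. q x \<partial>lborel) = 1"
  proof -
    have "(\<integral>x. q x \<partial>lborel) = Z / Z" unfolding q_def Z_def by simp
    then show ?thesis using Zp by simp
  qed
  have qdens: "pos_prob_density q"
    unfolding pos_prob_density_def using qpos qint qi1 by simp
  have lnq: "(\<lambda>t. ln (q t)) = (\<lambda>t. - VV R d t - ln Z)"
    using Zp by (auto simp: fun_eq_iff q_def ln_div)
  have dq: "((\<lambda>t. ln (q t)) has_real_derivative - VD R d x) (at x)" for x
  proof -
    have "((\<lambda>t. - VV R d t - ln Z) has_real_derivative - VD R d x - 0) (at x)"
      by (intro DERIV_diff DERIV_minus VV_deriv DERIV_const)
    then show ?thesis unfolding lnq by simp
  qed
  have sq: "score q x = - VD R d x" for x
    unfolding score_def by (rule DERIV_imp_deriv[OF dq])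
  have diffq: "\<forall>x. (\<lambda>t. ln (q t)) differentiable (at x)"
    using dq real_differentiable_def by blast
  have lip: "4-lipschitz_on UNIV (score q)"
  proof (rule lipschitz_onI)
    fix x y :: real
    show "dist (score q x) (score q y) \<le> 4 * dist x y"
      using VD_lip[of R d x y] by (simp add: sq dist_real_def abs_minus_commute)
  qed simp
  have iw: "integrable lborel (\<lambda>x. 4 * (std_normal_density x * x^2) * indicator {R..} x)"
    by (intro integrable_real_mult_indicator integrable_mult_right integrable_std_normal_moment) auto
  have nn: "(\<integral>\<^sup>+x. ennreal (std_normal_density x * (score std_normal_density x - score q x)\<^sup>2) \<partial>lborel) < ennreal e"
  proof -
    have "(\<integral>\<^sup>+x. ennreal (std_normal_density x * (score std_normal_density x - score q x)\<^sup>2) \<partial>lborel)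
        \<le> (\<integral>\<^sup>+x. ennreal (4 * (std_normal_density x * x^2) * indicator {R..} x) \<partial>lborel)"
    proof (rule nn_integral_mono)
      fix x :: real
      have g: "(VD R d x - x)\<^sup>2 \<le> 4 * x\<^sup>2 * indicator {R..} x" by (rule VD_gap[OF d(1,2)])
      have "std_normal_density x * (score std_normal_density x - score q x)\<^sup>2 = std_normal_density x * (VD R d x - x)\<^sup>2"
        by (simp add: score_std sq power2_commute)
      also have "\<dots> \<le> std_normal_density x * (4 * x\<^sup>2 * indicator {R..} x)"
        by (intro mult_left_mono g) simp
      also have "\<dots> = 4 * (std_normal_density x * x^2) * indicator {R..} x" by simp
      finally show "ennreal (std_normal_density x * (score std_normal_density x - score q x)\<^sup>2)
          \<le> ennreal (4 * (std_normal_density x * x^2) * indicator {R..} x)" by (rule ennreal_leI)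
    qed
    also have "\<dots> = ennreal (\<integral>x. 4 * (std_normal_density x * x^2) * indicator {R..} x \<partial>lborel)"
      by (rule nn_integral_eq_integral[OF iw]) (simp add: indicator_def)
    also have "\<dots> < ennreal e"
      using I1 e by (intro ennreal_lessI) auto
    finally show ?thesis .
  qed
  have pint: "integrable lborel std_normal_density" by (rule integrable_normal_density) auto
  have iA: "integrable lborel (\<lambda>x. q x * indicator {..R} x)"
    by (intro integrable_real_mult_indicator qint) auto
  have iB: "integrable lborel (\<lambda>x. std_normal_density x * indicator {R<..} x)"
    by (intro integrable_real_mult_indicator pint) auto
  have A: "(\<integral>x. q x * indicator {..R} x \<partial>lborel) \<le> e/4"
  proof -
    have "(\<integral>x. q x * indicator {..R} x \<partial>lborel) \<le> (\<integral>x. sqrt (2*pi) / Z * std_normal_density x \<partial>lborel)"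
    proof (rule integral_mono[OF iA])
      show "integrable lborel (\<lambda>x. sqrt (2*pi) / Z * std_normal_density x)"
        using pint by (intro integrable_mult_right) auto
      fix x :: real
      show "q x * indicator {..R} x \<le> sqrt (2*pi) / Z * std_normal_density x"
      proof (cases "x \<le> R")
        case True
        have "exp (- VV R d x) = sqrt (2*pi) * std_normal_density x"
          using VV_low[OF True d(1,2)] by (simp add: std_normal_density_def)
        then show ?thesis using True by (simp add: q_def)
      next
        case False
        then show ?thesis using Zp by simp
      qed
    qed
    also have "\<dots> = sqrt (2*pi) * (1 / Z)" by simp
    also have "\<dots> \<le> sqrt (2*pi) * (d * exp (R\<^sup>2))"
    proof (intro mult_left_mono)
      have "1 / Z \<le> 1 / (exp (- R\<^sup>2) / d)"
        using Zl d Zp by (intro divide_left_mono) auto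
      also have "\<dots> = d * exp (R\<^sup>2)" by (simp add: exp_minus field_simps)
      finally show "1 / Z \<le> d * exp (R\<^sup>2)" .
    qed simp
    also have "\<dots> \<le> sqrt (2*pi) * ((e / K) * exp (R\<^sup>2))"
      using d by (intro mult_left_mono mult_right_mono) auto
    also have "\<dots> = e / 4" unfolding K_def by (simp add: field_simps)
    finally show ?thesis .
  qed
  have tv: "tv_dist std_normal_density q > 1 - e"
  proof -
    let ?qa = "\<lambda>x. q x * indicator {..R} x"
    let ?pb = "\<lambda>x. std_normal_density x * indicator {R<..} x"
    have hb: "has_bochner_integral lborel (\<lambda>x. std_normal_density x + q x - 2 * ?qa x - 2 * ?pb x)
       ((\<integral>x. std_normal_density x \<partial>lborel) + (\<integral>x. q x \<partial>lborel) - 2 * (\<integral>x. ?qa x \<partial>lborel) - 2 * (\<integral>x. ?pb x \<partial>lborel))"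
      by (intro has_bochner_integral_diff has_bochner_integral_add has_bochner_integral_mult_right
          has_bochner_integral_integrable pint qint iA iB)
    have q1: "(\<integral>x. q x \<partial>lborel) = 1" using qdens unfolding pos_prob_density_def by simp
    have "2 - 2 * (\<integral>x. ?qa x \<partial>lborel) - 2 * (\<integral>x. ?pb x \<partial>lborel)
        = (\<integral>x. std_normal_density x + q x - 2 * ?qa x - 2 * ?pb x \<partial>lborel)"
      using has_bochner_integral_integral_eq[OF hb] q1 by simp
    also have "\<dots> \<le> (\<integral>x. \<bar>std_normal_density x - q x\<bar> \<partial>lborel)"
    proof (rule integral_mono)
      show "integrable lborel (\<lambda>x. std_normal_density x + q x - 2 * ?qa x - 2 * ?pb x)"
        using hb by (simp add: has_bochner_integral_iff)
      show "integrable lborel (\<lambda>x. \<bar>std_normal_density x - q x\<bar>)"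
        using pint qint by auto
      fix x :: real
      show "std_normal_density x + q x - 2 * ?qa x - 2 * ?pb x \<le> \<bar>std_normal_density x - q x\<bar>"
        by (cases "x \<le> R") (auto simp: indicator_def)
    qed
    finally have "2 - 2 * (\<integral>x. ?qa x \<partial>lborel) - 2 * (\<integral>x. ?pb x \<partial>lborel) \<le> (\<integral>x. \<bar>std_normal_density x - q x\<bar> \<partial>lborel)" .
    then show ?thesis unfolding tv_dist_def using A I2 e by linarith
  qed
  show "\<exists>q. pos_prob_density q \<and> (\<forall>x. (\<lambda>t. ln (q t)) differentiable at x) \<and>
         4-lipschitz_on UNIV (score q) \<and>
         (\<integral>\<^sup>+x. ennreal (std_normal_density x * (score std_normal_density x - score q x)\<^sup>2) \<partial>lborel) < ennreal e \<and>
         1 - e < tv_dist std_normal_density q"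
    using qdens diffq lip nn tv by blast
qed

end
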